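(* Let $\mathcal X\subset\mathbb R^d$ be finite, let $d$ denote Euclidean distance, and let $C=\{C_1,\dots,C_k\}$ be a center-based clustering of $\mathcal X$ whose centers $\mu_1,\dots,\mu_k$ are the centers of mass of the clusters, $\mu_i=\frac1{|C_i|}\sum_{x\in C_i}x$. Assume $C$ satisfies the $\gamma$-margin property. Fix $i\in[k]$ and $\epsilon\ge 0$, and let $\mu_i'\in\mathbb R^d$ be any point with $d(\mu_i,\mu_i')\le r(C_i)\,\epsilon$, where $r(C_i)=\max_{x\in C_i}d(x,\mu_i)$. If $\gamma\ge 1+2\epsilon$, then for all $x\in C_i$ and all $y\in\mathcal X\setminus C_i$ we have $d(x,\mu_i')<d(y,\mu_i')$.
   Context: A clustering $C=\{C_1,\dots,C_k\}$ of $\mathcal X$ is center-based with centers $\mu_1,\dots,\mu_k$ if for every $x\in\mathcal X$ and $i\le k$: $x\in C_i \iff i=\arg\min_j d(x,\mu_j)$. Such a clustering satisfies the $\gamma$-margin property if for all $i\in[k]$, every $x\in C_i$ and every $y\in\mathcal X\setminus C_i$: $\gamma\, d(x,\mu_i)<d(y,\mu_i)$. *)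

theory Defs
  imports "HOL-Analysis.Analysis"
begin

definition is_clustering :: "'a set \<Rightarrow> nat \<Rightarrow> (nat \<Rightarrow> 'a set) \<Rightarrow> bool" where
  "is_clustering X k C \<longleftrightarrow>
     (\<forall>i<k. C i \<noteq> {} \<and> C i \<subseteq> X) \<and>
     (\<forall>i<k. \<forall>j<k. i \<noteq> j \<longrightarrow> C i \<inter> C j = {}) \<and>
     (\<Union>i<k. C i) = X"

definition center_based ::
  "('a::metric_space) set \<Rightarrow> nat \<Rightarrow> (nat \<Rightarrow> 'a set) \<Rightarrow> (nat \<Rightarrow> 'a) \<Rightarrow> bool" where
  "center_based X k C mu \<longleftrightarrow>
     (\<forall>x\<in>X. \<forall>i<k. x \<in> C i \<longleftrightarrow> (\<forall>j<k. j \<noteq> i \<longrightarrow> dist x (mu i) < dist x (mu j)))"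

definition gamma_margin ::
  "real \<Rightarrow> ('a::metric_space) set \<Rightarrow> nat \<Rightarrow> (nat \<Rightarrow> 'a set) \<Rightarrow> (nat \<Rightarrow> 'a) \<Rightarrow> bool" where
  "gamma_margin \<gamma> X k C mu \<longleftrightarrow>
     (\<forall>i<k. \<forall>x\<in>C i. \<forall>y\<in>X - C i. \<gamma> * dist x (mu i) < dist y (mu i))"

definition center_of_mass :: "('a::real_vector) set \<Rightarrow> 'a" where
  "center_of_mass A = (1 / real (card A)) *\<^sub>R (\<Sum>x\<in>A. x)"

definition cluster_radius :: "('a::metric_space) set \<Rightarrow> 'a \<Rightarrow> real" where
  "cluster_radius A m = Max ((\<lambda>x. dist x m) ` A)"

end

theory Submission
  imports Defs
begin

theorem lemma1:
  fixes X :: "'a::euclidean_space set"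
    and k :: nat and C :: "nat \<Rightarrow> 'a set" and mu :: "nat \<Rightarrow> 'a"
    and \<gamma> \<epsilon> :: real and i :: nat and mu' :: 'a
  assumes "finite X"
    and "is_clustering X k C"
    and "center_based X k C mu"
    and "\<forall>j<k. mu j = center_of_mass (C j)"
    and "gamma_margin \<gamma> X k C mu"
    and "i < k"
    and "\<epsilon> \<ge> 0"
    and "dist (mu i) mu' \<le> cluster_radius (C i) (mu i) * \<epsilon>"
    and "\<gamma> \<ge> 1 + 2 * \<epsilon>"
  shows "\<forall>x\<in>C i. \<forall>y\<in>X - C i. dist x mu' < dist y mu'"
proof (intro ballI)
  fix x y assume x: "x \<in> C i" and y: "y \<in> X - C i"
  have ne: "C i \<noteq> {}" and sub: "C i \<subseteq> X" using assms(2,6) unfolding is_clustering_def by auto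
  have fin: "finite (C i)" using sub assms(1) finite_subset by blast
  define r where "r = cluster_radius (C i) (mu i)"
  have "r \<in> (\<lambda>x. dist x (mu i)) ` C i" unfolding r_def cluster_radius_def
    using fin ne by (intro Max_in) auto
  then obtain z where z: "z \<in> C i" "r = dist z (mu i)" by auto
  have xr: "dist x (mu i) \<le> r" unfolding r_def cluster_radius_def using fin x by (intro Max_ge) auto
  have "\<gamma> * dist z (mu i) < dist y (mu i)" using assms(5,6) z y unfolding gamma_margin_def by blast
  hence yr: "\<gamma> * r < dist y (mu i)" using z by simp
  have r0: "r \<ge> 0" using z by simp
  have "(1 + 2*\<epsilon>) * r \<le> \<gamma> * r" using assms(9) r0 by (intro mult_right_mono) auto
  have d: "dist (mu i) mu' \<le> r * \<epsilon>" using assms(8) r_def by simp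
  have t1: "dist x mu' \<le> dist x (mu i) + dist (mu i) mu'" by (rule dist_triangle)
  have t2: "dist y (mu i) \<le> dist y mu' + dist (mu i) mu'" by (metis dist_commute dist_triangle)
  show "dist x mu' < dist y mu'"
    using t1 t2 d xr yr \<open>(1 + 2*\<epsilon>) * r \<le> \<gamma> * r\<close> by (simp add: algebra_simps)
qed

end
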